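(* Let $K,s\ge1$ and let $f:\{0,1\}^s\to\mathbb Z_K$ be defined by $f(a_1,\ldots,a_s)=(\sum_{i=1}^s a_i)\bmod K$. If $s\ge K^2$, then $|f^{-1}(x)|\le\big(1+4\frac{K}{\sqrt s}\big)|f^{-1}(y)|$ for all $x,y\in\mathbb Z_K$. *)

theory Defs
  imports "HOL-Analysis.Analysis"
begin

definition cube :: "nat \<Rightarrow> (nat \<Rightarrow> nat) set" where
  "cube s = PiE {0..<s} (\<lambda>_. {0, 1})"

text \<open>f(a) = (sum of a_i) mod K, with Z_K identified with {0..<K}.\<close>
definition sum_mod :: "nat \<Rightarrow> nat \<Rightarrow> (nat \<Rightarrow> nat) \<Rightarrow> nat" where
  "sum_mod K s a = (\<Sum>i<s. a i) mod K"

definition fiber :: "nat \<Rightarrow> nat \<Rightarrow> nat \<Rightarrow> (nat \<Rightarrow> nat) set" where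
  "fiber K s x = {a \<in> cube s. sum_mod K s a = x}"

end

theory Submission
  imports Defs
begin


lemma central_rec: "((2*n+2) choose (n+1)) * (n+1) = 2*(2*n+1)*((2*n) choose n)"
proof -
  define X where "X = (2*n+2) choose (n+1)"
  define Y where "Y = (2*n+1) choose n"
  define Z where "Z = (2*n) choose n"
  have a: "(2*n+2) * Y = X * (n+1)"
    using Suc_times_binomial_eq[of "2*n+1" n] unfolding X_def Y_def by simp
  have c: "(2*n+1) choose (n+1) = Y"
    using binomial_symmetric[of "n+1" "2*n+1"] unfolding Y_def by simp
  have b: "(2*n+1) * Z = Y * (n+1)"
    using Suc_times_binomial_eq[of "2*n" n] c unfolding Z_def by simp
  have "X * (n+1) * (n+1) = (2*n+2) * (Y * (n+1))" using a by (simp add: algebra_simps)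
  also have "\<dots> = 2*(n+1)*((2*n+1)*Z)" using b by (simp add: algebra_simps)
  also have "\<dots> = (2*(2*n+1)*Z) * (n+1)" by (simp add: algebra_simps)
  finally have "X * (n+1) = 2*(2*n+1)*Z" by (subst (asm) mult_cancel2) simp
  then show ?thesis unfolding X_def Z_def .
qed

lemma central_Q: "n \<ge> 16 \<Longrightarrow> 25*(3*n+1)*((2*n) choose n)^2 \<le> 24*16^n"
proof (induction n rule: dec_induct)
  case base
  show ?case by (simp add: binomial_fact' fact_numeral)
next
  case (step n)
  define X where "X = (2*n+2) choose (n+1)"
  define Z where "Z = (2*n) choose n"
  have IH: "25*(3*n+1)*Z^2 \<le> 24*16^n" using step.IH unfolding Z_def .
  have rec: "X * (n+1) = 2*(2*n+1)*Z" using central_rec unfolding X_def Z_def .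
  have poly: "(3*n+4)*(2*n+1)^2 \<le> 4*(3*n+1)*(n+1)^2"
    by (simp add: power2_eq_square algebra_simps)
  have "(25*(3*n+4)*X^2) * (n+1)^2 = 25*(3*n+4)*(X*(n+1))^2"
    by (simp only: power_mult_distrib mult.assoc)
  also have "\<dots> = 4*((3*n+4)*(2*n+1)^2)*(25*Z^2)"
    unfolding rec by (simp add: power2_eq_square algebra_simps)
  also have "\<dots> \<le> 4*(4*(3*n+1)*(n+1)^2)*(25*Z^2)"
    using poly by (intro mult_right_mono mult_left_mono) auto
  also have "\<dots> = 16*(n+1)^2*(25*(3*n+1)*Z^2)" by (simp add: algebra_simps)
  also have "\<dots> \<le> 16*(n+1)^2*(24*16^n)" using IH by (intro mult_left_mono) auto
  also have "\<dots> = (24*16^(Suc n)) * (n+1)^2" by (simp add: algebra_simps)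
  finally have "25*(3*n+4)*X^2 \<le> 24*16^(Suc n)" by simp
  then show ?case unfolding X_def by (simp add: algebra_simps)
qed

lemma central_E: "50*n*((2*n) choose n)^2 \<le> 16*(4^n + ((2*n) choose n))^2"
proof (cases "n < 16")
  case True
  then have "n=0 \<or> n=1 \<or> n=2 \<or> n=3 \<or> n=4 \<or> n=5 \<or> n=6 \<or> n=7 \<or> n=8 \<or> n=9 \<or> n=10 \<or> n=11 \<or> n=12 \<or> n=13 \<or> n=14 \<or> n=15" by presburger
  then show ?thesis
    by (elim disjE) (simp_all add: binomial_fact' fact_numeral)
next
  case False
  define Z where "Z = (2*n) choose n"
  have Q: "25*(3*n+1)*Z^2 \<le> 24*16^n" using central_Q[of n] False unfolding Z_def by simp
  have "(50*n*Z^2) * (25*(3*n+1)) = 50*n*(25*(3*n+1)*Z^2)" by (simp add: algebra_simps)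
  also have "\<dots> \<le> 50*n*(24*16^n)" using Q by (intro mult_left_mono) auto
  also have "\<dots> \<le> (16*16^n) * (25*(3*n+1))" by (simp add: algebra_simps)
  finally have 1: "50*n*Z^2 \<le> 16*16^n" by (subst (asm) mult_le_cancel2) simp
  have "(16::nat)^n = (4^2)^n" by simp
  also have "\<dots> = 4^(2*n)" by (rule power_mult[symmetric])
  also have "\<dots> = (4^n)^2" by (metis power_mult mult.commute)
  also have "\<dots> \<le> (4^n + Z)^2" by (intro power_mono) auto
  finally have "16*16^n \<le> 16*(4^n+Z)^2" by simp
  with 1 show ?thesis unfolding Z_def by linarith
qed

lemma key_bound: "25 * (s::nat) * ((s choose (s div 2))^2) \<le> 16 * (2^s + (s choose (s div 2)))^2"
proof (cases "even s")
  case True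
  then obtain n where s: "s = 2*n" by auto
  have "(2::nat)^s = (2^2)^n" unfolding s by (rule power_mult)
  then have "(2::nat)^s = 4^n" by simp
  then show ?thesis using central_E[of n] unfolding s by simp
next
  case False
  then obtain n where s: "s = 2*n+1" using oddE by blast
  define M where "M = (2*n+1) choose n"
  have sd: "s div 2 = n" unfolding s by simp
  have c: "(2*n+1) choose (n+1) = M"
    using binomial_symmetric[of "n+1" "2*n+1"] unfolding M_def by simp
  have X: "(2*(n+1)) choose (n+1) = 2*M"
    using binomial_Suc_Suc[of "2*n+1" n] c unfolding M_def by (simp add: algebra_simps)
  define W where "W = (2::nat)^(2*n+1)"
  have "(4::nat)^(n+1) = (2^2)^(n+1)" by simp
  also have "\<dots> = 2^(2*(n+1))" by (rule power_mult[symmetric])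
  also have "\<dots> = 2*W" unfolding W_def by simp
  finally have W4: "(4::nat)^(n+1) = 2*W" .
  have E: "50*(n+1)*(2*M)^2 \<le> 16*(2*W + 2*M)^2" using central_E[of "n+1"] by (simp only: X W4)
  have "4*(25 * s * M^2) \<le> 4*(50*(n+1)*M^2)" unfolding s by simp
  also have "\<dots> = 50*(n+1)*(2*M)^2" by (simp add: power_mult_distrib)
  also have "\<dots> \<le> 16*(2*W + 2*M)^2" by (rule E)
  also have "\<dots> = 4*(16*(W+M)^2)" by (simp add: power2_eq_square algebra_simps)
  finally have "25 * s * M^2 \<le> 16*(W+M)^2" by simp
  then show ?thesis unfolding sd M_def W_def s by simp
qed



lemma finite_cube: "finite (cube s)" unfolding cube_def by (simp add: finite_PiE)
lemma card_cube: "card (cube s) = 2^s" unfolding cube_def by (simp add: card_PiE) (simp add: numeral_2_eq_2)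

lemma cube_val: "a \<in> cube s \<Longrightarrow> i < s \<Longrightarrow> a i = 0 \<or> a i = 1"
  unfolding cube_def by (auto dest: PiE_mem)

lemma cube_sum: assumes "a \<in> cube s" shows "(\<Sum>i<s. a i) = card {i\<in>{..<s}. a i = 1}"
proof -
  have "(\<Sum>i<s. a i) = (\<Sum>i<s. if a i = 1 then 1 else 0)"
  proof (rule sum.cong)
    fix i assume "i \<in> {..<s}"
    then have "a i = 0 \<or> a i = 1" using assms cube_val by auto
    then show "a i = (if a i = 1 then 1 else 0)" by auto
  qed simp
  also have "\<dots> = (\<Sum>i\<in>{i\<in>{..<s}. a i = 1}. 1)"
    using sum.inter_filter[of "{..<s}" "\<lambda>_. 1::nat" "\<lambda>i. a i = 1"] by simp
  also have "\<dots> = card {i\<in>{..<s}. a i = 1}" by simp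
  finally show ?thesis .
qed

lemma card_weight: "card {a\<in>cube s. (\<Sum>i<s. a i) = k} = s choose k"
proof -
  define W where "W = {a\<in>cube s. (\<Sum>i<s. a i) = k}"
  define f where "f = (\<lambda>a::nat\<Rightarrow>nat. {i\<in>{..<s}. a i = 1})"
  have "bij_betw f W {B. B \<subseteq> {..<s} \<and> card B = k}"
  proof (rule bij_betw_imageI)
    show "inj_on f W"
    proof (rule inj_onI)
      fix a b assume a: "a \<in> W" and b: "b \<in> W" and e: "f a = f b"
      show "a = b"
      proof (rule PiE_ext)
        show "a \<in> PiE {0..<s} (\<lambda>_. {0,1::nat})" using a unfolding W_def cube_def by auto
        show "b \<in> PiE {0..<s} (\<lambda>_. {0,1::nat})" using b unfolding W_def cube_def by auto
        fix i assume i: "i \<in> {0..<s}"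
        have "a i = 0 \<or> a i = 1" "b i = 0 \<or> b i = 1" using a b i cube_val unfolding W_def by auto
        moreover have "i \<in> f a \<longleftrightarrow> i \<in> f b" using e by simp
        then have "a i = 1 \<longleftrightarrow> b i = 1" using i unfolding f_def by simp
        ultimately show "a i = b i" by auto
      qed
    qed
    show "f ` W = {B. B \<subseteq> {..<s} \<and> card B = k}"
    proof
      show "f ` W \<subseteq> {B. B \<subseteq> {..<s} \<and> card B = k}"
      proof
        fix B assume "B \<in> f ` W"
        then obtain a where a: "a \<in> W" and B: "B = f a" by blast
        have "card B = k" using a cube_sum[of a s] unfolding W_def B f_def by simp
        moreover have "B \<subseteq> {..<s}" unfolding B f_def by blast
        ultimately show "B \<in> {B. B \<subseteq> {..<s} \<and> card B = k}" by simp
      qed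
    next
      show "{B. B \<subseteq> {..<s} \<and> card B = k} \<subseteq> f ` W"
      proof
        fix B assume B: "B \<in> {B. B \<subseteq> {..<s} \<and> card B = k}"
        define a where "a = (\<lambda>i. if i < s then (if i \<in> B then 1 else 0) else (undefined::nat))"
        have ac: "a \<in> cube s" unfolding cube_def a_def by (auto simp: PiE_def extensional_def)
        have fa: "f a = B" using B unfolding f_def a_def by auto
        have "(\<Sum>i<s. a i) = k" using cube_sum[OF ac] fa B unfolding f_def by simp
        then have "a \<in> W" using ac unfolding W_def by simp
        then show "B \<in> f ` W" using fa by (intro image_eqI[of _ f a]) auto
      qed
    qed
  qed
  then have "card W = card {B. B \<subseteq> {..<s} \<and> card B = k}" by (rule bij_betw_same_card)
  also have "\<dots> = s choose k" using n_subsets[of "{..<s}" k] by simp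
  finally show ?thesis unfolding W_def .
qed

lemma cube_sum_le: "a \<in> cube s \<Longrightarrow> (\<Sum>i<s. a i) \<le> s"
proof -
  assume a: "a \<in> cube s"
  have "(\<Sum>i<s. a i) \<le> (\<Sum>i<(s::nat). 1)"
    by (rule sum_mono) (use a cube_val in fastforce)
  then show ?thesis by simp
qed

lemma card_fiber: "card (fiber K s x) = (\<Sum>i\<in>{i. i \<le> s \<and> i mod K = x}. s choose i)"
proof -
  define X where "X = {i. i \<le> s \<and> i mod K = x}"
  have fe: "fiber K s x = (\<Union>i\<in>X. {a\<in>cube s. (\<Sum>j<s. a j) = i})"
  proof
    show "fiber K s x \<subseteq> (\<Union>i\<in>X. {a\<in>cube s. (\<Sum>j<s. a j) = i})"
    proof
      fix a assume a: "a \<in> fiber K s x"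
      then have ac: "a \<in> cube s" and am: "(\<Sum>j<s. a j) mod K = x" unfolding fiber_def sum_mod_def by auto
      have "(\<Sum>j<s. a j) \<in> X" unfolding X_def using am cube_sum_le[OF ac] by simp
      then show "a \<in> (\<Union>i\<in>X. {a\<in>cube s. (\<Sum>j<s. a j) = i})" using ac by blast
    qed
    show "(\<Union>i\<in>X. {a\<in>cube s. (\<Sum>j<s. a j) = i}) \<subseteq> fiber K s x"
      unfolding fiber_def X_def sum_mod_def by blast
  qed
  have "card (\<Union>i\<in>X. {a\<in>cube s. (\<Sum>j<s. a j) = i}) = (\<Sum>i\<in>X. card {a\<in>cube s. (\<Sum>j<s. a j) = i})"
    by (rule card_UN_disjoint) (auto simp: X_def finite_cube)
  then show ?thesis unfolding fe X_def by (simp add: card_weight)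
qed

lemma sum_fibers: assumes "K \<ge> 1" shows "(\<Sum>z<K. card (fiber K s z)) = 2^s"
proof -
  have "cube s = (\<Union>z\<in>{..<K}. fiber K s z)"
    unfolding fiber_def sum_mod_def using assms by auto
  moreover have "card (\<Union>z\<in>{..<K}. fiber K s z) = (\<Sum>z<K. card (fiber K s z))"
    by (rule card_UN_disjoint) (auto simp: fiber_def finite_cube)
  ultimately show ?thesis using card_cube by metis
qed

lemma residue_count:
  fixes S :: "nat set"
  assumes fin: "finite S" and conv: "\<And>i j k. i \<in> S \<Longrightarrow> j \<in> S \<Longrightarrow> i \<le> k \<Longrightarrow> k \<le> j \<Longrightarrow> k \<in> S"
    and K: "K > 0" and x: "x < K" and y: "y < K"
  shows "card {i\<in>S. i mod K = x} \<le> card {i\<in>S. i mod K = y} + 1"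
proof (cases "{i\<in>S. i mod K = x} = {}")
  case True show ?thesis unfolding True by simp
next
  case False
  define A where "A = {i\<in>S. i mod K = x}"
  define B where "B = {i\<in>S. i mod K = y}"
  have finA: "finite A" using fin unfolding A_def by simp
  define m where "m = Max A"
  have mA: "m \<in> A" using False finA unfolding m_def A_def by (intro Max_in) auto
  define d where "d = (y + K - x) mod K"
  have dK: "d < K" unfolding d_def using K by simp
  have cA: "card A = card (A - {m}) + 1" using mA finA
    by (simp add: card_Diff_singleton) (metis Suc_pred card_gt_0_iff empty_iff)
  have "card (A - {m}) \<le> card B"
  proof (rule card_inj_on_le)
    show "inj_on (\<lambda>i. i + d) (A - {m})" by (simp add: inj_on_def)
    show "finite B" using fin unfolding B_def by simp
    show "(\<lambda>i. i + d) ` (A - {m}) \<subseteq> B"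
    proof
      fix j assume "j \<in> (\<lambda>i. i + d) ` (A - {m})"
      then obtain i where i: "i \<in> A" "i \<noteq> m" and j: "j = i + d" by auto
      have "i \<le> m" using i finA unfolding m_def by simp
      with i have im: "i < m" by simp
      have mod: "m mod K = i mod K" using i mA unfolding A_def by simp
      then have "K dvd (m - i)" using im by (simp add: mod_eq_dvd_iff_nat)
      moreover have "m - i > 0" using im by simp
      ultimately have "K \<le> m - i" by (simp add: dvd_imp_le)
      then have "j \<le> m" using j dK by linarith
      have "i \<in> S" "m \<in> S" using i mA unfolding A_def by auto
      then have jS: "j \<in> S" using conv[of i m j] \<open>j \<le> m\<close> j by simp
      have ix: "i mod K = x" using i unfolding A_def by simp
      have "j mod K = (i mod K + d) mod K" unfolding j by (simp add: mod_add_left_eq)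
      also have "\<dots> = (x + (y + K - x)) mod K" unfolding ix d_def by (simp add: mod_add_right_eq)
      also have "\<dots> = (y + K) mod K" using x by simp
      also have "\<dots> = y" using y by simp
      finally show "j \<in> B" using jS unfolding B_def by simp
    qed
  qed
  then show ?thesis using cA unfolding A_def B_def by simp
qed



lemma binom_convex:
  assumes "i \<le> k" "k \<le> j" "j \<le> s" "t \<le> s choose i" "t \<le> s choose j"
  shows "t \<le> s choose k"
proof (cases "2*k \<le> s")
  case True
  then have "s choose i \<le> s choose k" using assms by (intro binomial_mono) auto
  then show ?thesis using assms by linarith
next
  case False
  then have "s choose j \<le> s choose k" using assms by (intro binomial_antimono) auto
  then show ?thesis using assms by linarith
qed

lemma fiber_diff:
  assumes K: "K \<ge> 1" and x: "x < K" and y: "y < K"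
  shows "card (fiber K s x) \<le> card (fiber K s y) + (s choose (s div 2))"
proof -
  define M where "M = s choose (s div 2)"
  define S where "S = (\<lambda>t. {i. i \<le> s \<and> t \<le> s choose i})"
  have rep: "card (fiber K s z) = (\<Sum>t\<in>{1..M}. card {i\<in>S t. i mod K = z})" for z
  proof -
    have fin: "finite {i. i \<le> s \<and> i mod K = z}"
      by (rule finite_subset[of _ "{..s}"]) auto
    have "card (fiber K s z) = (\<Sum>i\<in>{i. i \<le> s \<and> i mod K = z}. s choose i)" by (rule card_fiber)
    also have "\<dots> = (\<Sum>i\<in>{i. i \<le> s \<and> i mod K = z}. \<Sum>t\<in>{1..M}. (if t \<le> s choose i then 1 else 0))"
    proof (rule sum.cong[OF refl])
      fix i
      have "s choose i \<le> M" unfolding M_def by (rule binomial_maximum)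
      then have e: "{t\<in>{1..M}. t \<le> s choose i} = {1..s choose i}" by auto
      have "(\<Sum>t\<in>{1..M}. (if t \<le> s choose i then 1 else 0)) = (\<Sum>t\<in>{t\<in>{1..M}. t \<le> s choose i}. (1::nat))"
        using sum.inter_filter[of "{1..M}" "\<lambda>_. 1::nat" "\<lambda>t. t \<le> s choose i"] by simp
      also have "\<dots> = s choose i" unfolding e by simp
      finally show "s choose i = (\<Sum>t\<in>{1..M}. (if t \<le> s choose i then 1 else 0))" by simp
    qed
    also have "\<dots> = (\<Sum>t\<in>{1..M}. \<Sum>i\<in>{i. i \<le> s \<and> i mod K = z}. (if t \<le> s choose i then 1 else 0))"
      by (rule sum.swap)
    also have "\<dots> = (\<Sum>t\<in>{1..M}. card {i\<in>S t. i mod K = z})"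
    proof (rule sum.cong[OF refl])
      fix t
      have "(\<Sum>i\<in>{i. i \<le> s \<and> i mod K = z}. (if t \<le> s choose i then 1 else 0))
          = (\<Sum>i\<in>{i\<in>{i. i \<le> s \<and> i mod K = z}. t \<le> s choose i}. (1::nat))"
        using sum.inter_filter[OF fin, of "\<lambda>_. 1::nat" "\<lambda>i. t \<le> s choose i"] by simp
      also have "\<dots> = card {i\<in>{i. i \<le> s \<and> i mod K = z}. t \<le> s choose i}" by simp
      also have "{i\<in>{i. i \<le> s \<and> i mod K = z}. t \<le> s choose i} = {i\<in>S t. i mod K = z}"
        unfolding S_def by auto
      finally show "(\<Sum>i\<in>{i. i \<le> s \<and> i mod K = z}. (if t \<le> s choose i then 1 else 0)) = card {i\<in>S t. i mod K = z}" .
    qed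
    finally show ?thesis .
  qed
  have "(\<Sum>t\<in>{1..M}. card {i\<in>S t. i mod K = x}) \<le> (\<Sum>t\<in>{1..M}. card {i\<in>S t. i mod K = y} + 1)"
  proof (rule sum_mono)
    fix t
    show "card {i\<in>S t. i mod K = x} \<le> card {i\<in>S t. i mod K = y} + 1"
    proof (rule residue_count)
      show "finite (S t)" unfolding S_def by (rule finite_subset[of _ "{..s}"]) auto
      show "k \<in> S t" if "i \<in> S t" "j \<in> S t" "i \<le> k" "k \<le> j" for i j k
        using that binom_convex[of i k j s t] unfolding S_def by auto
    qed (use K x y in auto)
  qed
  also have "\<dots> = (\<Sum>t\<in>{1..M}. card {i\<in>S t. i mod K = y}) + M"
    by (simp only: sum.distrib) simp
  finally show ?thesis unfolding rep M_def .
qed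

theorem lemma5:
  fixes K s x y :: nat
  assumes "K \<ge> 1" and "s \<ge> 1" and "s \<ge> K^2"
    and "x < K" and "y < K"
  shows "real (card (fiber K s x)) \<le> (1 + 4 * real K / sqrt (real s)) * real (card (fiber K s y))"
proof -
  define M where "M = real (s choose (s div 2))"
  define N where "N = (\<lambda>z. real (card (fiber K s z)))"
  define u where "u = sqrt (real s)"
  have d: "N z \<le> N y + M" if "z < K" for z
  proof -
    have "card (fiber K s z) \<le> card (fiber K s y) + (s choose (s div 2))"
      using fiber_diff[OF assms(1) that assms(5)] .
    then have "real (card (fiber K s z)) \<le> real (card (fiber K s y) + (s choose (s div 2)))"
      by (simp only: of_nat_le_iff)
    then show ?thesis unfolding N_def M_def by simp
  qed
  have tot: "(\<Sum>z<K. N z) = 2^s"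
  proof -
    have "real (\<Sum>z<K. card (fiber K s z)) = real ((2::nat)^s)" using sum_fibers[OF assms(1), of s] by simp
    then show ?thesis unfolding N_def by simp
  qed
  have "(\<Sum>z<K. N z) = N y + (\<Sum>z\<in>{..<K}-{y}. N z)"
    by (rule sum.remove) (use assms(5) in auto)
  also have "(\<Sum>z\<in>{..<K}-{y}. N z) \<le> (\<Sum>z\<in>{..<K}-{y}. N y + M)"
    by (rule sum_mono) (use d in auto)
  also have "\<dots> = (real K - 1) * (N y + M)"
    using assms(5) assms(1) by (simp add: of_nat_diff)
  finally have tot2: "2^s \<le> N y + (real K - 1) * (N y + M)" using tot by simp
  have M0: "M \<ge> 0" unfolding M_def by simp
  have Ny0: "N y \<ge> 0" unfolding N_def by simp
  have spos: "real s > 0" using assms(2) by simp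
  have u0: "u > 0" unfolding u_def using spos by simp
  have uu: "u^2 = real s" unfolding u_def using spos by simp
  have Ku: "real K \<le> u" unfolding u_def
  proof (rule real_le_rsqrt)
    have "real (K^2) \<le> real s" using assms(3) by (simp only: of_nat_le_iff)
    then show "(real K)^2 \<le> real s" by simp
  qed
  have kb: "25 * real s * M^2 \<le> 16 * (2^s + M)^2"
  proof -
    have "real (25 * s * (s choose (s div 2))^2) \<le> real (16 * (2^s + (s choose (s div 2)))^2)"
      using key_bound[of s] by (simp only: of_nat_le_iff)
    then show ?thesis unfolding M_def by simp
  qed
  have five: "5 * u * M \<le> 4 * (2^s + M)"
  proof (rule power2_le_imp_le)
    have "(5 * u * M)^2 = 25 * real s * M^2" using uu by (simp add: power_mult_distrib)
    moreover have "(4 * (2^s + M))^2 = 16 * (2^s + M)^2" by (simp only: power_mult_distrib) simp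
    ultimately show "(5 * u * M)^2 \<le> (4 * (2^s + M))^2" using kb by simp
    show "0 \<le> 4 * (2^s + M)" using M0 by simp
  qed
  have km: "(real K - 1) * M \<le> (u - 1) * M" using Ku M0 by (intro mult_right_mono) auto
  have "(real K - 1) * (N y + M) = real K * N y - N y + (real K - 1) * M" by (simp add: algebra_simps)
  with tot2 have "2^s \<le> real K * N y + (real K - 1) * M" by linarith
  with km have tot3: "2^s \<le> real K * N y + (u - 1) * M" by linarith
  have "u * M = 5 * u * M - 4 * (u * M)" by simp
  have "M * u \<le> 4 * real K * N y"
    using five tot3 by (simp add: algebra_simps)
  then have M4: "M \<le> 4 * real K * N y / u" using u0 by (simp add: pos_le_divide_eq)
  have "N x \<le> N y + M" using d assms(4) by simp
  also have "\<dots> \<le> N y + 4 * real K * N y / u" using M4 by simp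
  also have "\<dots> = (1 + 4 * real K / u) * N y" by (simp add: field_simps)
  finally show ?thesis unfolding N_def u_def .
qed

end
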